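(* Every connected graph $G$ with at least $2$ vertices has a connecting transition set of size $|V(G)|-2$.
   Context: All graphs are finite, simple and undirected. A transition of a graph $G$ is an unordered pair $\{ab,bc\}$ of two distinct edges of $G$ sharing the vertex $b$ (so $a\neq c$); it is written $abc$. A walk in $G$ is a sequence $(v_1,\dots,v_k)$ of vertices with $v_iv_{i+1}\in E(G)$ for all $i\le k-1$; it leads from $v_1$ to $v_k$. For a set $T$ of transitions of $G$, a walk $(v_1,\dots,v_k)$ is $T$-compatible if for every $i\in[1,k-2]$, either $v_i=v_{i+2}$ or $v_iv_{i+1}v_{i+2}\in T$. The graph $G$ is $T$-connected, and $T$ is a connecting transition set of $G$, if for all vertices $u,v$ of $G$ there is a $T$-compatible walk leading from $u$ to $v$. *)

theory Defs
  imports Main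
begin

definition simple_graph :: "'a set \<Rightarrow> 'a set set \<Rightarrow> bool" where
  "simple_graph V E \<longleftrightarrow> finite V \<and>
     (\<forall>e\<in>E. \<exists>u v. e = {u, v} \<and> u \<noteq> v \<and> u \<in> V \<and> v \<in> V)"

definition transitions :: "'a set \<Rightarrow> 'a set set \<Rightarrow> 'a set set set" where
  "transitions V E = {{{a, b}, {b, c}} | a b c. {a, b} \<in> E \<and> {b, c} \<in> E \<and> a \<noteq> c}"

definition is_walk :: "'a set \<Rightarrow> 'a set set \<Rightarrow> 'a list \<Rightarrow> bool" where
  "is_walk V E vs \<longleftrightarrow> vs \<noteq> [] \<and> set vs \<subseteq> V \<and>
     (\<forall>i. Suc i < length vs \<longrightarrow> {vs ! i, vs ! Suc i} \<in> E)"

definition walk_from_to :: "'a set \<Rightarrow> 'a set set \<Rightarrow> 'a list \<Rightarrow> 'a \<Rightarrow> 'a \<Rightarrow> bool" where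
  "walk_from_to V E vs u v \<longleftrightarrow> is_walk V E vs \<and> hd vs = u \<and> last vs = v"

definition T_compatible :: "'a set set set \<Rightarrow> 'a list \<Rightarrow> bool" where
  "T_compatible T vs \<longleftrightarrow>
     (\<forall>i. i + 2 < length vs \<longrightarrow>
        vs ! i = vs ! (i + 2) \<or> {{vs ! i, vs ! (i + 1)}, {vs ! (i + 1), vs ! (i + 2)}} \<in> T)"

definition T_connected :: "'a set \<Rightarrow> 'a set set \<Rightarrow> 'a set set set \<Rightarrow> bool" where
  "T_connected V E T \<longleftrightarrow>
     (\<forall>u\<in>V. \<forall>v\<in>V. \<exists>vs. walk_from_to V E vs u v \<and> T_compatible T vs)"

definition connecting_transition_set :: "'a set \<Rightarrow> 'a set set \<Rightarrow> 'a set set set \<Rightarrow> bool" where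
  "connecting_transition_set V E T \<longleftrightarrow> T \<subseteq> transitions V E \<and> T_connected V E T"

definition graph_connected :: "'a set \<Rightarrow> 'a set set \<Rightarrow> bool" where
  "graph_connected V E \<longleftrightarrow> (\<forall>u\<in>V. \<forall>v\<in>V. \<exists>vs. walk_from_to V E vs u v)"

end

theory Submission imports Defs begin

lemma all_nat_split: "(\<forall>i::nat. P i) \<longleftrightarrow> P 0 \<and> (\<forall>i. P (Suc i))"
  by (metis nat.exhaust)

fun tc :: "'a set set set \<Rightarrow> 'a list \<Rightarrow> bool" where
  "tc T (a#b#c#r) = ((a = c \<or> {{a,b},{b,c}} \<in> T) \<and> tc T (b#c#r))"
| "tc T _ = True"

lemma tc_eq: "T_compatible T xs = tc T xs"
proof (induction T xs rule: tc.induct)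
  case (1 T a b c r)
  have "T_compatible T (a#b#c#r) = ((a = c \<or> {{a,b},{b,c}} \<in> T) \<and> T_compatible T (b#c#r))"
    unfolding T_compatible_def by (subst all_nat_split) simp
  then show ?case using 1 by simp
qed (auto simp: T_compatible_def)

lemma tc_mono: "tc T xs \<Longrightarrow> T \<subseteq> T' \<Longrightarrow> tc T' xs"
  by (induction T xs rule: tc.induct) auto

lemma tc_append: "tc T (xs @ a # b # ys) \<longleftrightarrow> tc T (xs @ [a,b]) \<and> tc T (a # b # ys)"
proof (induction xs rule: induct_list012)
  case (3 x y zs)
  then show ?case by (cases zs) auto
qed auto

lemma tc_rev: "tc T (rev xs) = tc T xs"
proof (induction xs rule: induct_list012)
  case (3 x y zs)
  show ?case
  proof (cases zs)
    case Nil then show ?thesis by simp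
  next
    case (Cons w zs')
    have "tc T (rev (x#y#zs)) = tc T (rev zs' @ w # y # [x])" using Cons by simp
    also have "\<dots> = (tc T (rev zs' @ [w,y]) \<and> tc T [w,y,x])" by (rule tc_append)
    also have "rev zs' @ [w,y] = rev (y#zs)" using Cons by simp
    finally show ?thesis using 3 Cons by (auto simp: insert_commute)
  qed
qed auto

lemma is_walk_alt: "is_walk V E vs \<longleftrightarrow> vs \<noteq> [] \<and> set vs \<subseteq> V \<and> successively (\<lambda>a b. {a,b}\<in>E) vs"
  by (simp add: is_walk_def successively_conv_nth)

lemma leave: "successively P vs \<Longrightarrow> vs \<noteq> [] \<Longrightarrow> hd vs \<in> S \<Longrightarrow> last vs \<notin> S \<Longrightarrow> \<exists>a b. a \<in> S \<and> b \<notin> S \<and> b \<in> set vs \<and> P a b"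
proof (induction vs)
  case (Cons x xs)
  show ?case
  proof (cases xs)
    case Nil then show ?thesis using Cons by simp
  next
    case (Cons y ys)
    show ?thesis
    proof (cases "y \<in> S")
      case True
      then show ?thesis using Cons.IH Cons.prems Cons by (auto simp: successively_Cons)
    next
      case False
      then show ?thesis using Cons.prems Cons by (auto simp: successively_Cons)
    qed
  qed
qed simp


definition Inv :: "'a set \<Rightarrow> 'a set set \<Rightarrow> 'a set \<Rightarrow> 'a set set set \<Rightarrow> bool" where
  "Inv V E S T \<longleftrightarrow> S \<subseteq> V \<and> finite T \<and> card T = card S - 2 \<and> T \<subseteq> transitions V E \<and>
     (\<forall>t\<in>T. \<forall>e\<in>t. e \<subseteq> S) \<and>
     (\<exists>p q. \<forall>x\<in>S. \<exists>ws. is_walk S E (p#q#ws) \<and> tc T (p#q#ws) \<and> last (p#q#ws) = x)"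

lemma is_walk_mono: "is_walk S E vs \<Longrightarrow> S \<subseteq> S' \<Longrightarrow> is_walk S' E vs"
  by (auto simp: is_walk_def)

lemma Inv_base:
  assumes "simple_graph V E" "E \<noteq> {}"
  shows "\<exists>S T. Inv V E S T \<and> card S = 2"
proof -
  obtain e where "e \<in> E" using assms by auto
  then obtain p q where pq: "e = {p,q}" "p \<noteq> q" "p \<in> V" "q \<in> V"
    using assms(1) unfolding simple_graph_def by blast
  have w1: "is_walk {p,q} E [p,q]" using pq \<open>e\<in>E\<close> by (simp add: is_walk_alt)
  have w2: "is_walk {p,q} E [p,q,p]" using pq \<open>e\<in>E\<close> by (simp add: is_walk_alt insert_commute)
  have "Inv V E {p,q} {}"
    unfolding Inv_def
  proof (intro conjI)
    show "\<exists>p' q'. \<forall>x\<in>{p,q}. \<exists>ws. is_walk {p,q} E (p'#q'#ws) \<and> tc {} (p'#q'#ws) \<and> last (p'#q'#ws) = x"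
    proof (rule exI[of _ p], rule exI[of _ q], intro ballI)
      fix x assume "x \<in> {p,q}"
      show "\<exists>ws. is_walk {p,q} E (p#q#ws) \<and> tc {} (p#q#ws) \<and> last (p#q#ws) = x"
      proof (cases "x = p")
        case True
        have "is_walk {p,q} E (p#q#[p]) \<and> tc {} (p#q#[p]) \<and> last (p#q#[p]) = x" using w2 True by simp
        then show ?thesis by blast
      next
        case False
        then have "x = q" using \<open>x \<in> {p,q}\<close> by simp
        then have "is_walk {p,q} E (p#q#[]) \<and> tc {} (p#q#[]) \<and> last (p#q#[]) = x" using w1 by simp
        then show ?thesis by blast
      qed
    qed
  qed (use pq in simp_all)
  moreover have "card {p,q} = 2" using pq by simp
  ultimately show ?thesis by blast
qed

lemma Inv_step:
  assumes g: "simple_graph V E" and c: "graph_connected V E"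
    and I: "Inv V E S T" and cs: "2 \<le> card S" and ne: "S \<noteq> V"
  shows "\<exists>S' T'. Inv V E S' T' \<and> card S' = Suc (card S)"
proof -
  have fV: "finite V" using g by (simp add: simple_graph_def)
  note I' = I[unfolded Inv_def]
  have SV: "S \<subseteq> V" using I' by (rule conjunct1)
  have fT: "finite T" using I' by (elim conjE)
  have cT: "card T = card S - 2" using I' by (elim conjE)
  have TE: "T \<subseteq> transitions V E" using I' by (elim conjE)
  have TS: "\<forall>t\<in>T. \<forall>e\<in>t. e \<subseteq> S" using I' by (elim conjE)
  have "\<exists>p q. \<forall>x\<in>S. \<exists>ws. is_walk S E (p#q#ws) \<and> tc T (p#q#ws) \<and> last (p#q#ws) = x"
    using I' by (elim conjE)
  then obtain p q where W: "\<forall>x\<in>S. \<exists>ws. is_walk S E (p#q#ws) \<and> tc T (p#q#ws) \<and> last (p#q#ws) = x"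
    by blast
  have fS: "finite S" using SV fV finite_subset by blast
  have "S \<noteq> {}" using cs by auto
  then obtain s where s: "s \<in> S" by blast
  obtain x where x: "x \<in> V" "x \<notin> S" using SV ne by blast
  have sV: "s \<in> V" using s SV by blast
  have "\<forall>u\<in>V. \<forall>v\<in>V. \<exists>vs. walk_from_to V E vs u v" using c unfolding graph_connected_def .
  then obtain vs where vs: "walk_from_to V E vs s x" using sV x(1) by blast
  then have "successively (\<lambda>a b. {a,b}\<in>E) vs" "vs \<noteq> []" "hd vs \<in> S" "last vs \<notin> S" "set vs \<subseteq> V"
    using s x by (auto simp: walk_from_to_def is_walk_alt)
  then obtain u v where uv: "u \<in> S" "v \<notin> S" "v \<in> V" "{u,v} \<in> E"
    using leave[of "\<lambda>a b. {a,b}\<in>E" vs S] by blast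
  obtain ws where ws: "is_walk S E (p#q#ws)" "tc T (p#q#ws)" "last (p#q#ws) = u"
    using W uv by blast
  obtain xs a b where L: "p#q#ws = xs @ [a,b]"
  proof -
    have len: "length (rev (p#q#ws)) \<ge> 2" by simp
    obtain b a rs where r: "rev (p#q#ws) = b # a # rs"
    proof (cases "rev (p#q#ws)")
      case Nil then show ?thesis using len by simp
    next
      case (Cons b r1)
      then show ?thesis using len that by (cases r1) auto
    qed
    then have "rev (rev (p#q#ws)) = rev (b#a#rs)" by (rule arg_cong)
    then have "p#q#ws = rev rs @ [a,b]" by simp
    then show ?thesis using that by blast
  qed
  have bu: "b = u"
  proof -
    have "b = last (xs @ [a,b])" by simp
    also have "\<dots> = u" unfolding L[symmetric] by (rule ws(3))
    finally show ?thesis .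
  qed
  have "set (p#q#ws) \<subseteq> S" using ws(1) unfolding is_walk_alt by blast
  then have "set (xs @ [a,b]) \<subseteq> S" unfolding L .
  then have aS: "a \<in> S" by simp
  have abE: "{a,u} \<in> E" using ws(1) L bu unfolding is_walk_alt by (simp add: successively_append_iff)
  have av: "a \<noteq> v" using aS uv(2) by blast
  define t where "t = {{a,u},{u,v}}"
  define T' where "T' = insert t T"
  have tnot: "t \<notin> T"
  proof
    assume tT: "t \<in> T"
    have uvt: "{u,v} \<in> t" unfolding t_def by simp
    have "\<forall>e\<in>t. e \<subseteq> S" using TS tT by (rule bspec)
    then have "{u,v} \<subseteq> S" using uvt by (rule bspec)
    then show False using uv(2) by simp
  qed
  have tin: "t \<in> transitions V E" unfolding transitions_def t_def
    by (rule CollectI, intro exI[of _ a] exI[of _ u] exI[of _ v]) (simp add: abE uv av)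
  have "Inv V E (insert v S) T'"
    unfolding Inv_def
  proof (intro conjI)
    show "insert v S \<subseteq> V" using SV uv by auto
    show "finite T'" using fT by (simp add: T'_def)
    have c1: "card T' = Suc (card T)" unfolding T'_def using fT tnot by (rule card_insert_disjoint)
    have c2: "card (insert v S) = Suc (card S)" using fS uv(2) by (rule card_insert_disjoint)
    show "card T' = card (insert v S) - 2" unfolding c1 c2 cT using cs by simp
    show "T' \<subseteq> transitions V E" using TE tin unfolding T'_def by simp
    have "\<forall>e\<in>t. e \<subseteq> insert v S" using aS uv(1) unfolding t_def by simp
    then show "\<forall>t\<in>T'. \<forall>e\<in>t. e \<subseteq> insert v S" using TS unfolding T'_def by blast
    show "\<exists>p q. \<forall>x\<in>insert v S. \<exists>ws. is_walk (insert v S) E (p#q#ws) \<and> tc T' (p#q#ws) \<and> last (p#q#ws) = x"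
    proof (rule exI[of _ p], rule exI[of _ q], intro ballI)
      fix y assume y: "y \<in> insert v S"
      show "\<exists>ws. is_walk (insert v S) E (p#q#ws) \<and> tc T' (p#q#ws) \<and> last (p#q#ws) = y"
      proof (cases "y = v")
        case False
        then obtain ws' where "is_walk S E (p#q#ws')" "tc T (p#q#ws')" "last (p#q#ws') = y"
          using W y by auto
        then have "is_walk (insert v S) E (p#q#ws') \<and> tc T' (p#q#ws') \<and> last (p#q#ws') = y"
          using is_walk_mono[of S E "p#q#ws'" "insert v S"] tc_mono[of T "p#q#ws'" T']
          unfolding T'_def by blast
        then show ?thesis by blast
      next
        case True
        have sw: "set (p#q#ws) \<subseteq> S" "successively (\<lambda>a b. {a,b}\<in>E) (p#q#ws)"
          using ws(1) unfolding is_walk_alt by blast+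
        have "successively (\<lambda>a b. {a,b}\<in>E) ((p#q#ws) @ [v])"
          unfolding successively_append_iff using sw(2) ws(3) uv(4) by simp
        moreover have "set ((p#q#ws) @ [v]) \<subseteq> insert v S" using sw(1) by auto
        ultimately have "is_walk (insert v S) E ((p#q#ws) @ [v])"
          unfolding is_walk_alt by simp
        then have "is_walk (insert v S) E (p#q#ws @ [v])" by simp
        moreover have "tc T' (p#q#ws @ [v])"
        proof -
          have "p#q#ws @ [v] = xs @ a # u # [v]" using L bu by simp
          moreover have "tc T' (xs @ [a,u])" using ws(2) L bu tc_mono[of T _ T'] by (auto simp: T'_def)
          moreover have "tc T' [a,u,v]" by (simp add: T'_def t_def)
          ultimately show ?thesis using tc_append by metis
        qed
        ultimately show ?thesis using True by (intro exI[of _ "ws @ [v]"]) simp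
      qed
    qed
  qed
  then show ?thesis using uv fS by (metis card_insert_disjoint)
qed


theorem corollary2:
  fixes V :: "'a set" and E :: "'a set set"
  assumes "simple_graph V E" and "graph_connected V E" and "card V \<ge> 2"
  shows "\<exists>T. connecting_transition_set V E T \<and> card T = card V - 2"
proof -
  have fV: "finite V" using assms(1) unfolding simple_graph_def by (rule conjunct1)
  have EV: "E \<noteq> {}"
  proof
    assume E0: "E = {}"
    have "\<not> card V \<le> Suc 0" using assms(3) by simp
    then have "\<not> (\<forall>a1\<in>V. \<forall>a2\<in>V. a1 = a2)" using card_le_Suc0_iff_eq[OF fV] by blast
    then obtain x y where xy: "x \<in> V" "y \<in> V" "x \<noteq> y" by blast
    have "\<forall>u\<in>V. \<forall>v\<in>V. \<exists>vs. walk_from_to V E vs u v" using assms(2) unfolding graph_connected_def .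
    then obtain vs where "walk_from_to V E vs x y" using xy by blast
    then have vne: "vs \<noteq> []" and hx: "hd vs = x" and ly: "last vs = y"
      and all: "\<forall>i. Suc i < length vs \<longrightarrow> {vs ! i, vs ! Suc i} \<in> E"
      unfolding walk_from_to_def is_walk_def by blast+
    have len: "Suc 0 < length vs"
    proof (rule ccontr)
      assume "\<not> Suc 0 < length vs"
      with vne have "hd vs = last vs" by (cases vs) auto
      then show False using hx ly xy(3) by simp
    qed
    then have "{vs ! 0, vs ! Suc 0} \<in> E" using all by blast
    then show False using E0 by simp
  qed
  have main: "\<forall>k. 2 \<le> k \<longrightarrow> k \<le> card V \<longrightarrow> (\<exists>S T. Inv V E S T \<and> card S = k)"
  proof (intro allI impI)
    fix k :: nat assume k: "2 \<le> k" "k \<le> card V"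
    then show "\<exists>S T. Inv V E S T \<and> card S = k"
    proof (induction k rule: nat_induct_at_least)
      case base then show ?case using Inv_base[OF assms(1) EV] by blast
    next
      case (Suc n)
      have "n \<le> card V" using Suc.prems by simp
      then obtain S T where ST: "Inv V E S T" "card S = n" using Suc.IH by blast
      have "S \<subseteq> V" using ST(1) unfolding Inv_def by (rule conjunct1)
      moreover have "S \<noteq> V" using ST(2) Suc.prems by auto
      moreover have "2 \<le> card S" using ST(2) Suc.hyps by simp
      ultimately obtain S' T' where "Inv V E S' T'" "card S' = Suc (card S)"
        using Inv_step[OF assms(1,2) ST(1)] by blast
      then show ?case using ST(2) by blast
    qed
  qed
  obtain S T where ST: "Inv V E S T" "card S = card V" using main assms(3) by blast
  note I' = ST(1)[unfolded Inv_def]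
  have "S \<subseteq> V" using I' by (rule conjunct1)
  then have SV: "S = V" using ST(2) fV by (simp add: card_subset_eq)
  have TE: "T \<subseteq> transitions V E" using I' by (elim conjE)
  have cT: "card T = card V - 2" using I' ST(2) by (elim conjE) simp
  have "\<exists>p q. \<forall>x\<in>S. \<exists>ws. is_walk S E (p#q#ws) \<and> tc T (p#q#ws) \<and> last (p#q#ws) = x"
    using I' by (elim conjE)
  then obtain p q where W: "\<forall>x\<in>V. \<exists>ws. is_walk V E (p#q#ws) \<and> tc T (p#q#ws) \<and> last (p#q#ws) = x"
    unfolding SV by blast
  have "T_connected V E T"
    unfolding T_connected_def
  proof (intro ballI)
    fix x y assume xy: "x \<in> V" "y \<in> V"
    obtain A where A: "is_walk V E (p#q#A)" "tc T (p#q#A)" "last (p#q#A) = x" using W xy(1) by blast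
    obtain B where B: "is_walk V E (p#q#B)" "tc T (p#q#B)" "last (p#q#B) = y" using W xy(2) by blast
    define vs where "vs = rev (p#q#A) @ q # B"
    have sym: "(\<lambda>a b. {b,a} \<in> E) = (\<lambda>a b. {a,b} \<in> E)" by (simp add: insert_commute)
    have sA: "set (p#q#A) \<subseteq> V" "successively (\<lambda>a b. {a,b}\<in>E) (p#q#A)"
      using A(1) unfolding is_walk_alt by blast+
    have sB: "set (p#q#B) \<subseteq> V" "successively (\<lambda>a b. {a,b}\<in>E) (p#q#B)"
      using B(1) unfolding is_walk_alt by blast+
    have s1: "successively (\<lambda>a b. {a,b}\<in>E) (rev (p#q#A))"
      unfolding successively_rev sym by (rule sA(2))
    have s2: "successively (\<lambda>a b. {a,b}\<in>E) (q#B)" and pq: "{p,q} \<in> E"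
      using sB(2) by simp_all
    have "successively (\<lambda>a b. {a,b}\<in>E) vs"
      unfolding vs_def successively_append_iff using s1 s2 pq by simp
    moreover have "set vs \<subseteq> V" unfolding vs_def using sA(1) sB(1) by auto
    ultimately have "is_walk V E vs" unfolding is_walk_alt vs_def by simp
    moreover have "hd vs = x" using A(3) unfolding vs_def by (cases "A = []") (simp_all add: hd_append hd_rev)
    moreover have "last vs = y" using B(3) unfolding vs_def by (cases B) auto
    moreover have "tc T vs"
    proof -
      have "vs = rev A @ q # p # q # B" unfolding vs_def by simp
      moreover have "tc T (rev A @ [q,p])" using A(2) tc_rev[of T "p#q#A"] by simp
      moreover have "tc T (q # p # q # B)" using B(2) by simp
      ultimately show ?thesis using tc_append by metis
    qed
    ultimately show "\<exists>vs. walk_from_to V E vs x y \<and> T_compatible T vs"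
      unfolding walk_from_to_def tc_eq by blast
  qed
  then show ?thesis using TE cT unfolding connecting_transition_set_def by blast
qed

end
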